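(* Fix a slot $t$ and arbitrary values $W(t)\in[0,W_{max}]$, $S(t)\in\mathcal{S}$ and $X(t)\in\mathbb{R}$, and a parameter $V>0$. Consider problem P3 for this slot, with decision variable $P\in[P_{low},P_{high}]$, where $P_{low}=\max[0,W(t)-D_{max}]$, $P_{high}=\min[P_{peak},W(t)+R_{max}]$, and the induced $R=\max(P-W(t),0)$, $D=\max(W(t)-P,0)$. Then every optimal solution $P^*(t)$ of P3 (with induced $R^*(t),D^*(t)$) satisfies: (1) if $X(t)>-V C_{min}$, then $R^*(t)=0$ (i.e. $P^*(t)\le W(t)$); (2) if $X(t)<-V\chi_{min}$, then $D^*(t)=0$ (i.e. $P^*(t)\ge W(t)$).
   Context: Basic model. Time is slotted, $t=0,1,2,\dots$. In slot $t$ the workload (in units of power) is $W(t)\in[0,W_{max}]$. A controller chooses the grid power $P(t)$, the battery recharge amount $R(t)$ and the battery discharge amount $D(t)$ subject to: $W(t)=P(t)-R(t)+D(t)$; $R(t)>0\Rightarrow D(t)=0$ and $D(t)>0\Rightarrow R(t)=0$; $0\le R(t)\le R_{max}$, $0\le D(t)\le D_{max}$; $0\le P(t)\le P_{peak}$, where $P_{peak}\ge W_{max}$. An auxiliary state $S(t)$ takes values in a finite set $\mathcal{S}$. The per-unit price is $C(t)=\hat C(S(t),P(t))$, where for each $s\in\mathcal{S}$ the map $P\mapsto\hat C(s,P)$ is non-negative, finite and non-decreasing on $[0,P_{peak}]$ (not necessarily continuous or convex). $C_{min}$ and $C_{max}$ denote the minimum and maximum of $\hat C(s,P)$ over $s\in\mathcal{S}$,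 $P\in[0,P_{peak}]$. Constants $C_{rc}\ge0$, $C_{dc}\ge0$ are the fixed costs of a recharge and a discharge operation. Indicators: $1_R(t)=1$ if $R(t)>0$ and $0$ otherwise; $1_D(t)=1$ if $D(t)>0$ and $0$ otherwise. The constant $\chi_{min}>0$ is such that for all $P_1\le P_2$ in $[0,P_{peak}]$, all $\chi\ge\chi_{min}$ and all $s\in\mathcal{S}$: $P_1(-\chi+\hat C(s,P_1))\ge P_2(-\chi+\hat C(s,P_2))$; it is assumed that $\chi_{min}>C_{min}$. Problem P3 (for slot $t$, given $W(t),S(t),X(t)$ and $V>0$): minimize $X(t)P+V\big[P\,\hat C(S(t),P)+1_R C_{rc}+1_D C_{dc}\big]$ over $P\in[P_{low},P_{high}]$, where $R=\max(P-W(t),0)$, $D=\max(W(t)-P,0)$, $1_R=1$ iff $P>W(t)$, $1_D=1$ iff $P<W(t)$. *)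

theory Defs
  imports Main "HOL-Library.Multiset" Complex_Main
begin

definition ind :: "real \<Rightarrow> real" where
  "ind x = (if x > 0 then 1 else 0)"

definition recharge :: "real \<Rightarrow> real \<Rightarrow> real" where
  "recharge W P = max (P - W) 0"

definition discharge :: "real \<Rightarrow> real \<Rightarrow> real" where
  "discharge W P = max (W - P) 0"

definition P3_obj :: "('s \<Rightarrow> real \<Rightarrow> real) \<Rightarrow> real \<Rightarrow> real \<Rightarrow> real \<Rightarrow> real
    \<Rightarrow> 's \<Rightarrow> real \<Rightarrow> real \<Rightarrow> real" where
  "P3_obj Chat Crc Cdc V W s X P =
     X * P + V * (P * Chat s P + ind (recharge W P) * Crc + ind (discharge W P) * Cdc)"

definition P_low :: "real \<Rightarrow> real \<Rightarrow> real" where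
  "P_low Dmax W = max 0 (W - Dmax)"

definition P_high :: "real \<Rightarrow> real \<Rightarrow> real \<Rightarrow> real" where
  "P_high Ppeak Rmax W = min Ppeak (W + Rmax)"

definition P3_optimal :: "('s \<Rightarrow> real \<Rightarrow> real) \<Rightarrow> real \<Rightarrow> real \<Rightarrow> real \<Rightarrow> real \<Rightarrow> real
    \<Rightarrow> real \<Rightarrow> real \<Rightarrow> 's \<Rightarrow> real \<Rightarrow> real \<Rightarrow> bool" where
  "P3_optimal Chat Crc Cdc Ppeak Rmax Dmax V W s X P \<longleftrightarrow>
     P \<in> {P_low Dmax W .. P_high Ppeak Rmax W} \<and>
     (\<forall>Q \<in> {P_low Dmax W .. P_high Ppeak Rmax W}.
        P3_obj Chat Crc Cdc V W s X P \<le> P3_obj Chat Crc Cdc V W s X Q)"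

end

theory Submission
  imports Defs
begin

theorem lemma2:
  fixes Chat :: "'s \<Rightarrow> real \<Rightarrow> real" and SS :: "'s set"
    and Wmax Ppeak Rmax Dmax Crc Cdc Cmin chimin V W X Pstar :: real and s :: 's
  assumes SS_fin: "finite SS" and SS_ne: "SS \<noteq> {}"
    and Ppeak: "Ppeak \<ge> Wmax"
    and Rmax: "Rmax \<ge> 0" and Dmax: "Dmax \<ge> 0"
    and Crc: "Crc \<ge> 0" and Cdc: "Cdc \<ge> 0"
    and C_nonneg: "\<And>s' P. s' \<in> SS \<Longrightarrow> P \<in> {0..Ppeak} \<Longrightarrow> Chat s' P \<ge> 0"
    and C_mono: "\<And>s' P1 P2. s' \<in> SS \<Longrightarrow> 0 \<le> P1 \<Longrightarrow> P1 \<le> P2 \<Longrightarrow> P2 \<le> Ppeak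
                   \<Longrightarrow> Chat s' P1 \<le> Chat s' P2"
    and Cmin_lb: "\<And>s' P. s' \<in> SS \<Longrightarrow> P \<in> {0..Ppeak} \<Longrightarrow> Cmin \<le> Chat s' P"
    and Cmin_att: "\<exists>s'\<in>SS. \<exists>P\<in>{0..Ppeak}. Chat s' P = Cmin"
    and chimin_pos: "chimin > 0"
    and chimin_prop: "\<And>s' P1 P2 chi. s' \<in> SS \<Longrightarrow> 0 \<le> P1 \<Longrightarrow> P1 \<le> P2 \<Longrightarrow> P2 \<le> Ppeak
                   \<Longrightarrow> chi \<ge> chimin \<Longrightarrow> P1 * (- chi + Chat s' P1) \<ge> P2 * (- chi + Chat s' P2)"
    and chimin_gt: "chimin > Cmin"
    and W: "W \<in> {0..Wmax}" and s: "s \<in> SS" and V: "V > 0"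
    and opt: "P3_optimal Chat Crc Cdc Ppeak Rmax Dmax V W s X Pstar"
  shows "(X > - V * Cmin \<longrightarrow> recharge W Pstar = 0)
       \<and> (X < - V * chimin \<longrightarrow> discharge W Pstar = 0)"
proof -
  have Wr: "W \<in> {P_low Dmax W .. P_high Ppeak Rmax W}"
    using W Ppeak Rmax Dmax by (auto simp: P_low_def P_high_def)
  have Pr: "Pstar \<in> {P_low Dmax W .. P_high Ppeak Rmax W}"
    and le: "P3_obj Chat Crc Cdc V W s X Pstar \<le> P3_obj Chat Crc Cdc V W s X W"
    using opt Wr unfolding P3_optimal_def by auto
  have P0: "0 \<le> Pstar" "Pstar \<le> Ppeak" using Pr by (auto simp: P_low_def P_high_def)
  have W0: "0 \<le> W" "W \<le> Ppeak" using W Ppeak by auto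
  have objW: "P3_obj Chat Crc Cdc V W s X W = X * W + V * (W * Chat s W)"
    by (simp add: P3_obj_def ind_def recharge_def discharge_def)
  show ?thesis
  proof (intro conjI impI)
    assume X: "X > - V * Cmin"
    show "recharge W Pstar = 0"
    proof (rule ccontr)
      assume "recharge W Pstar \<noteq> 0"
      hence gt: "Pstar > W" by (auto simp: recharge_def)
      have objP: "P3_obj Chat Crc Cdc V W s X Pstar = X * Pstar + V * (Pstar * Chat s Pstar + Crc)"
        using gt by (simp add: P3_obj_def ind_def recharge_def discharge_def)
      have m: "Chat s W \<le> Chat s Pstar" using C_mono[OF s W0(1) _ P0(2)] gt by auto
      have c: "Cmin \<le> Chat s W" using Cmin_lb[OF s] W0 by auto
      have "Pstar * Chat s Pstar \<ge> Pstar * Chat s W" using m P0 by (simp add: mult_left_mono)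
      hence "Pstar * Chat s Pstar - W * Chat s W \<ge> (Pstar - W) * Cmin"
        using c gt by (smt (verit) left_diff_distrib mult_left_mono)
      hence "V * (Pstar * Chat s Pstar - W * Chat s W) \<ge> V * ((Pstar - W) * Cmin)"
        using V by (simp add: mult_left_mono)
      moreover have "(Pstar - W) * (X + V * Cmin) > 0" using gt X by (intro mult_pos_pos) auto
      ultimately show False using le objP objW Crc V
        by (smt (verit) mult_nonneg_nonneg right_diff_distrib distrib_left mult.commute mult.left_commute)
    qed
  next
    assume X: "X < - V * chimin"
    show "discharge W Pstar = 0"
    proof (rule ccontr)
      assume "discharge W Pstar \<noteq> 0"
      hence lt: "Pstar < W" by (auto simp: discharge_def)
      have objP: "P3_obj Chat Crc Cdc V W s X Pstar = X * Pstar + V * (Pstar * Chat s Pstar + Cdc)"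
        using lt by (simp add: P3_obj_def ind_def recharge_def discharge_def)
      have "Pstar * (- chimin + Chat s Pstar) \<ge> W * (- chimin + Chat s W)"
        using chimin_prop[OF s P0(1) _ W0(2)] lt by auto
      hence h: "Pstar * Chat s Pstar - W * Chat s W \<ge> chimin * (Pstar - W)"
        by (simp add: algebra_simps)
      hence "V * (Pstar * Chat s Pstar - W * Chat s W) \<ge> V * (chimin * (Pstar - W))"
        using V by (simp add: mult_left_mono)
      moreover have "(Pstar - W) * (X + V * chimin) > 0"
        using lt X by (simp add: mult_neg_neg)
      ultimately show False using le objP objW Cdc V
        by (smt (verit) mult_nonneg_nonneg right_diff_distrib distrib_left mult.commute mult.left_commute)
    qed
  qed
qed

end
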